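(* Let $\mathbb A_V=(A,V,\psi_V^A,\sigma_V^A)$ and $\mathbb A_W=(A,W,\psi_W^A,\sigma_W^A)$ be two quadruples (with the same monoid $A$), each satisfying the twisted condition and the cocycle condition, and suppose there exist a link morphism $\Delta_{V\otimes W}:V\otimes W\to V\otimes W$ and a twisting morphism $\tau_W^V:W\otimes V\to V\otimes W$ between them. Define $$\sigma_{V\otimes W}^A=(\mu_A\otimes V\otimes W)\circ(A\otimes\psi_V^A\otimes W)\circ(\sigma_V^A\otimes\sigma_W^A)\circ(V\otimes\tau_W^V\otimes W):V\otimes W\otimes V\otimes W\to A\otimes V\otimes W,$$ and assume $\sigma_{V\otimes W}^A=\sigma_{V\otimes W}^A\circ(\Delta_{V\otimes W}\otimes V\otimes W)$, $\sigma_{V\otimes W}^A=\sigma_{V\otimes W}^A\circ(V\otimes W\otimes\Delta_{V\otimes W})$ and $\sigma_{V\otimes W}^A=(A\otimes\Delta_{V\otimes W})\circ\sigma_{V\otimes W}^A$. Then the quadruple $\mathbb A_{V\otimes W}=(A,V\otimes W,\psi_{V\otimes W}^A,\sigma_{V\otimes W}^A)$ satisfies the twisted condition, the cocycle condition and $\nabla_{A\otimes V\otimes W}\circ\sigma_{V\otimes W}^A=\sigma_{V\otimes W}^A$. Consequently $(A\otimes V\otimes W,\mu_{A\otimes V\otimes W})$ is a weak crossed product, where $$\mu_{A\otimes V\otimes W}=(\mu_A\otimes V\otimes W)\circ(\mu_A\otimes\sigma_{V\otimes W}^A)\circ(A\otimes\psi_{V\otimes W}^A\otimes V\otimes W).$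$
   Context: $\mathcal C$ is a strict monoidal category with tensor product $\otimes$ and unit object $K$, in which every idempotent morphism splits; for an object $X$ and a morphism $f$, $X\otimes f$ means $id_X\otimes f$ and $f\otimes X$ means $f\otimes id_X$. A monoid $(A,\eta_A,\mu_A)$ is an object with unit and associative unital product. A quadruple $\mathbb A_V=(A,V,\psi_V^A,\sigma_V^A)$ consists of a monoid $A$, an object $V$, and morphisms $\psi_V^A:V\otimes A\to A\otimes V$, $\sigma_V^A:V\otimes V\to A\otimes V$ such that $(\mu_A\otimes V)\circ(A\otimes\psi_V^A)\circ(\psi_V^A\otimes A)=\psi_V^A\circ(V\otimes\mu_A)$; put $\nabla_{A\otimes V}=(\mu_A\otimes V)\circ(A\otimes\psi_V^A)\circ(A\otimes V\otimes\eta_A)$ (an idempotent), and it is a standing assumption that $\nabla_{A\otimes V}\circ\sigma_V^A=\sigma_V^A$. Twisted condition: $(\mu_A\otimes V)\circ(A\otimes\psi_V^A)\circ(\sigma_V^A\otimes A)=(\mu_A\otimes V)\circ(A\otimes\sigma_V^A)\circ(\psi_V^A\otimes V)\circ(V\otimes\psi_V^A)$. Cocycle condition: $(\mu_A\otimes V)\circ(A\otimes\sigma_V^A)\circ(\sigma_V^A\otimes V)=(\mu_A\otimes V)\circ(A\otimes\sigma_V^A)\circ(\psi_V^A\otimes V)\circ(V\otimes\sigma_V^A)$. If both hold, $(A\otimes V,\mu_{A\otimes V})$ with $\mu_{A\otimes V}=(\mu_A\otimes V)\circ(\mu_A\otimes\sigma_V^A)\circ(A\otimes\psi_V^A\otimes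 V)$ is called a weak crossed product (this product is then associative). Link morphism: given quadruples $\mathbb A_V,\mathbb A_W$ and $\Delta_{V\otimes W}:V\otimes W\to V\otimes W$, put $\psi_{V\otimes W}^A=(\psi_V^A\otimes W)\circ(V\otimes\psi_W^A)\circ(\Delta_{V\otimes W}\otimes A)$ and $\nabla_{A\otimes V\otimes W}=(\mu_A\otimes V\otimes W)\circ(A\otimes\psi_{V\otimes W}^A)\circ(A\otimes V\otimes W\otimes\eta_A)$; $\Delta_{V\otimes W}$ is a link morphism if $\psi_{V\otimes W}^A=(A\otimes\Delta_{V\otimes W})\circ\psi_{V\otimes W}^A$ and $\psi_{V\otimes W}^A=\nabla_{A\otimes V\otimes W}\circ(\psi_V^A\otimes W)\circ(V\otimes\psi_W^A)$. Twisting morphism: $\tau_W^V:W\otimes V\to V\otimes W$ such that (i) $(\psi_V^A\otimes W)\circ(V\otimes\psi_W^A)\circ(\tau_W^V\otimes A)=(A\otimes\tau_W^V)\circ(\psi_W^A\otimes V)\circ(W\otimes\psi_V^A)$; (ii) $(\mu_A\otimes V\otimes W)\circ(A\otimes\sigma_V^A\otimes W)\circ(\psi_V^A\otimes\tau_W^V)\circ(V\otimes\sigma_W^A\otimes V)\circ(\tau_W^V\otimes W\otimes V)=(\mu_A\otimes V\otimes W)\circ(A\otimes\psi_V^A\otimes W)\circ(A\otimes V\otimes\sigma_W^A)\circ(A\otimes\tau_W^V\otimes W)\circ(\psi_W^A\otimes V\otimes W)\circ(W\otimes\sigma_V^A\otimes W)\circ(W\otimes V\otimes\tau_W^V)$.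 The twisted and cocycle conditions for $\mathbb A_{V\otimes W}$ are the same formulas with $V$ replaced by $V\otimes W$. *)

theory Defs
  imports Main
begin

text \<open>A (small) category with a strict monoidal structure, presented by
  objects of type 'o and morphisms of type 'm.  c_arr singles out the
  morphisms; c_dom, c_cod are source and target; c_cmp g f is the composite
  g after f; c_idm X is the identity of X; c_tobj and c_tmor are the tensor
  product on objects and morphisms; c_unit is the unit object K.\<close>

record ('o, 'm) smcat =
  c_arr  :: "'m \<Rightarrow> bool"
  c_dom  :: "'m \<Rightarrow> 'o"
  c_cod  :: "'m \<Rightarrow> 'o"
  c_cmp  :: "'m \<Rightarrow> 'm \<Rightarrow> 'm"
  c_idm  :: "'o \<Rightarrow> 'm"
  c_tobj :: "'o \<Rightarrow> 'o \<Rightarrow> 'o"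
  c_tmor :: "'m \<Rightarrow> 'm \<Rightarrow> 'm"
  c_unit :: "'o"

locale strict_monoidal_cat =
  fixes C :: "('o, 'm) smcat"
  assumes id_arr: "c_arr C (c_idm C X)"
    and id_dom: "c_dom C (c_idm C X) = X"
    and id_cod: "c_cod C (c_idm C X) = X"
    and cmp_arr: "\<lbrakk>c_arr C f; c_arr C g; c_dom C g = c_cod C f\<rbrakk> \<Longrightarrow>
        c_arr C (c_cmp C g f) \<and> c_dom C (c_cmp C g f) = c_dom C f \<and> c_cod C (c_cmp C g f) = c_cod C g"
    and cmp_id_right: "c_arr C f \<Longrightarrow> c_cmp C f (c_idm C (c_dom C f)) = f"
    and cmp_id_left: "c_arr C f \<Longrightarrow> c_cmp C (c_idm C (c_cod C f)) f = f"
    and cmp_assoc: "\<lbrakk>c_arr C f; c_arr C g; c_arr C h; c_dom C g = c_cod C f; c_dom C h = c_cod C g\<rbrakk> \<Longrightarrow>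
        c_cmp C h (c_cmp C g f) = c_cmp C (c_cmp C h g) f"
    and tmor_arr: "\<lbrakk>c_arr C f; c_arr C g\<rbrakk> \<Longrightarrow>
        c_arr C (c_tmor C f g) \<and> c_dom C (c_tmor C f g) = c_tobj C (c_dom C f) (c_dom C g)
        \<and> c_cod C (c_tmor C f g) = c_tobj C (c_cod C f) (c_cod C g)"
    and tmor_id: "c_tmor C (c_idm C X) (c_idm C Y) = c_idm C (c_tobj C X Y)"
    and interchange: "\<lbrakk>c_arr C f; c_arr C g; c_arr C f'; c_arr C g'; c_dom C g = c_cod C f; c_dom C g' = c_cod C f'\<rbrakk> \<Longrightarrow>
        c_tmor C (c_cmp C g f) (c_cmp C g' f') = c_cmp C (c_tmor C g g') (c_tmor C f f')"
    and tobj_assoc: "c_tobj C (c_tobj C X Y) Z = c_tobj C X (c_tobj C Y Z)"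
    and tobj_unit_left: "c_tobj C (c_unit C) X = X"
    and tobj_unit_right: "c_tobj C X (c_unit C) = X"
    and tmor_assoc: "\<lbrakk>c_arr C f; c_arr C g; c_arr C h\<rbrakk> \<Longrightarrow>
        c_tmor C (c_tmor C f g) h = c_tmor C f (c_tmor C g h)"
    and tmor_unit_left: "c_arr C f \<Longrightarrow> c_tmor C (c_idm C (c_unit C)) f = f"
    and tmor_unit_right: "c_arr C f \<Longrightarrow> c_tmor C f (c_idm C (c_unit C)) = f"
    and idempotents_split: "\<lbrakk>c_arr C e; c_dom C e = c_cod C e; c_cmp C e e = e\<rbrakk> \<Longrightarrow>
        \<exists>Y p i. c_arr C p \<and> c_dom C p = c_dom C e \<and> c_cod C p = Y \<and>
                c_arr C i \<and> c_dom C i = Y \<and> c_cod C i = c_dom C e \<and>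
                c_cmp C p i = c_idm C Y \<and> c_cmp C i p = e"
begin

abbreviation cmp (infixr "\<cdot>" 55) where "g \<cdot> f \<equiv> c_cmp C g f"
abbreviation tm (infixr "\<otimes>" 70) where "f \<otimes> g \<equiv> c_tmor C f g"
abbreviation to (infixr "\<odot>" 70) where "X \<odot> Y \<equiv> c_tobj C X Y"
abbreviation I where "I X \<equiv> c_idm C X"
abbreviation K where "K \<equiv> c_unit C"

definition hom :: "'m \<Rightarrow> 'o \<Rightarrow> 'o \<Rightarrow> bool" where
  "hom f X Y \<longleftrightarrow> c_arr C f \<and> c_dom C f = X \<and> c_cod C f = Y"

definition monoid :: "'o \<Rightarrow> 'm \<Rightarrow> 'm \<Rightarrow> bool" where
  "monoid A eta mu \<longleftrightarrow> hom eta K A \<and> hom mu (A \<odot> A) A \<and>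
     mu \<cdot> (mu \<otimes> I A) = mu \<cdot> (I A \<otimes> mu) \<and>
     mu \<cdot> (eta \<otimes> I A) = I A \<and> mu \<cdot> (I A \<otimes> eta) = I A"

definition nabla :: "'o \<Rightarrow> 'm \<Rightarrow> 'm \<Rightarrow> 'o \<Rightarrow> 'm \<Rightarrow> 'm" where
  "nabla A eta mu V psi = (mu \<otimes> I V) \<cdot> (I A \<otimes> psi) \<cdot> (I (A \<odot> V) \<otimes> eta)"

definition quadruple :: "'o \<Rightarrow> 'm \<Rightarrow> 'm \<Rightarrow> 'o \<Rightarrow> 'm \<Rightarrow> 'm \<Rightarrow> bool" where
  "quadruple A eta mu V psi sigma \<longleftrightarrow> monoid A eta mu \<and>
     hom psi (V \<odot> A) (A \<odot> V) \<and> hom sigma (V \<odot> V) (A \<odot> V) \<and>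
     (mu \<otimes> I V) \<cdot> (I A \<otimes> psi) \<cdot> (psi \<otimes> I A) = psi \<cdot> (I V \<otimes> mu) \<and>
     nabla A eta mu V psi \<cdot> sigma = sigma"

definition twisted :: "'o \<Rightarrow> 'm \<Rightarrow> 'm \<Rightarrow> 'o \<Rightarrow> 'm \<Rightarrow> 'm \<Rightarrow> bool" where
  "twisted A eta mu V psi sigma \<longleftrightarrow>
     (mu \<otimes> I V) \<cdot> (I A \<otimes> psi) \<cdot> (sigma \<otimes> I A) =
     (mu \<otimes> I V) \<cdot> (I A \<otimes> sigma) \<cdot> (psi \<otimes> I V) \<cdot> (I V \<otimes> psi)"

definition cocycle :: "'o \<Rightarrow> 'm \<Rightarrow> 'm \<Rightarrow> 'o \<Rightarrow> 'm \<Rightarrow> 'm \<Rightarrow> bool" where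
  "cocycle A eta mu V psi sigma \<longleftrightarrow>
     (mu \<otimes> I V) \<cdot> (I A \<otimes> sigma) \<cdot> (sigma \<otimes> I V) =
     (mu \<otimes> I V) \<cdot> (I A \<otimes> sigma) \<cdot> (psi \<otimes> I V) \<cdot> (I V \<otimes> sigma)"

definition wcp_product :: "'o \<Rightarrow> 'm \<Rightarrow> 'm \<Rightarrow> 'o \<Rightarrow> 'm \<Rightarrow> 'm \<Rightarrow> 'm" where
  "wcp_product A eta mu V psi sigma =
     (mu \<otimes> I V) \<cdot> (mu \<otimes> sigma) \<cdot> (I A \<otimes> psi \<otimes> I V)"

text \<open>(A (x) V, mu_{A (x) V}) is a weak crossed product: by definition, the
  twisted and cocycle conditions hold for the quadruple.\<close>
definition weak_crossed_product :: "'o \<Rightarrow> 'm \<Rightarrow> 'm \<Rightarrow> 'o \<Rightarrow> 'm \<Rightarrow> 'm \<Rightarrow> bool" where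
  "weak_crossed_product A eta mu V psi sigma \<longleftrightarrow>
     quadruple A eta mu V psi sigma \<and> twisted A eta mu V psi sigma \<and> cocycle A eta mu V psi sigma"

definition psi_tensor :: "'o \<Rightarrow> 'o \<Rightarrow> 'o \<Rightarrow> 'm \<Rightarrow> 'm \<Rightarrow> 'm \<Rightarrow> 'm" where
  "psi_tensor A V W psiV psiW Delta = (psiV \<otimes> I W) \<cdot> (I V \<otimes> psiW) \<cdot> (Delta \<otimes> I A)"

definition link_morphism ::
  "'o \<Rightarrow> 'm \<Rightarrow> 'm \<Rightarrow> 'o \<Rightarrow> 'm \<Rightarrow> 'o \<Rightarrow> 'm \<Rightarrow> 'm \<Rightarrow> bool" where
  "link_morphism A eta mu V psiV W psiW Delta \<longleftrightarrow>
     hom Delta (V \<odot> W) (V \<odot> W) \<and>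
     psi_tensor A V W psiV psiW Delta = (I A \<otimes> Delta) \<cdot> psi_tensor A V W psiV psiW Delta \<and>
     psi_tensor A V W psiV psiW Delta =
       nabla A eta mu (V \<odot> W) (psi_tensor A V W psiV psiW Delta) \<cdot> (psiV \<otimes> I W) \<cdot> (I V \<otimes> psiW)"

definition twisting_morphism ::
  "'o \<Rightarrow> 'm \<Rightarrow> 'o \<Rightarrow> 'm \<Rightarrow> 'm \<Rightarrow> 'o \<Rightarrow> 'm \<Rightarrow> 'm \<Rightarrow> 'm \<Rightarrow> bool" where
  "twisting_morphism A mu V psiV sigmaV W psiW sigmaW tau \<longleftrightarrow>
     hom tau (W \<odot> V) (V \<odot> W) \<and>
     (psiV \<otimes> I W) \<cdot> (I V \<otimes> psiW) \<cdot> (tau \<otimes> I A) = (I A \<otimes> tau) \<cdot> (psiW \<otimes> I V) \<cdot> (I W \<otimes> psiV) \<and>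
     (mu \<otimes> I V \<otimes> I W) \<cdot> (I A \<otimes> sigmaV \<otimes> I W) \<cdot> (psiV \<otimes> tau) \<cdot> (I V \<otimes> sigmaW \<otimes> I V) \<cdot> (tau \<otimes> I W \<otimes> I V)
   = (mu \<otimes> I V \<otimes> I W) \<cdot> (I A \<otimes> psiV \<otimes> I W) \<cdot> (I A \<otimes> I V \<otimes> sigmaW) \<cdot> (I A \<otimes> tau \<otimes> I W)
       \<cdot> (psiW \<otimes> I V \<otimes> I W) \<cdot> (I W \<otimes> sigmaV \<otimes> I W) \<cdot> (I W \<otimes> I V \<otimes> tau)"

definition sigma_tensor ::
  "'o \<Rightarrow> 'm \<Rightarrow> 'o \<Rightarrow> 'm \<Rightarrow> 'm \<Rightarrow> 'o \<Rightarrow> 'm \<Rightarrow> 'm \<Rightarrow> 'm" where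
  "sigma_tensor A mu V psiV sigmaV W sigmaW tau =
     (mu \<otimes> I V \<otimes> I W) \<cdot> (I A \<otimes> psiV \<otimes> I W) \<cdot> (sigmaV \<otimes> sigmaW) \<cdot> (I V \<otimes> tau \<otimes> I W)"

end

end

theory Submission
  imports Defs
begin


context strict_monoidal_cat
begin

declare id_arr[simp] id_dom[simp] id_cod[simp] tobj_unit_left[simp] tobj_unit_right[simp] tobj_assoc[simp]
  tmor_id[simp]

lemma arr_cmp[simp]: "c_arr C f \<Longrightarrow> c_arr C g \<Longrightarrow> c_dom C g = c_cod C f \<Longrightarrow> c_arr C (g \<cdot> f)"
  using cmp_arr by blast
lemma dom_cmp[simp]: "c_arr C f \<Longrightarrow> c_arr C g \<Longrightarrow> c_dom C g = c_cod C f \<Longrightarrow> c_dom C (g \<cdot> f) = c_dom C f"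
  using cmp_arr by blast
lemma cod_cmp[simp]: "c_arr C f \<Longrightarrow> c_arr C g \<Longrightarrow> c_dom C g = c_cod C f \<Longrightarrow> c_cod C (g \<cdot> f) = c_cod C g"
  using cmp_arr by blast
lemma arr_tm[simp]: "c_arr C f \<Longrightarrow> c_arr C g \<Longrightarrow> c_arr C (f \<otimes> g)"
  using tmor_arr by blast
lemma dom_tm[simp]: "c_arr C f \<Longrightarrow> c_arr C g \<Longrightarrow> c_dom C (f \<otimes> g) = c_dom C f \<odot> c_dom C g"
  using tmor_arr by blast
lemma cod_tm[simp]: "c_arr C f \<Longrightarrow> c_arr C g \<Longrightarrow> c_cod C (f \<otimes> g) = c_cod C f \<odot> c_cod C g"
  using tmor_arr by blast

lemma cmp_assoc': "\<lbrakk>c_arr C f; c_arr C g; c_arr C h; c_dom C g = c_cod C f; c_dom C h = c_cod C g\<rbrakk> \<Longrightarrow>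
        (h \<cdot> g) \<cdot> f = h \<cdot> (g \<cdot> f)"
  using cmp_assoc by simp
lemma cmp_idR: "c_arr C f \<Longrightarrow> c_dom C f = X \<Longrightarrow> f \<cdot> I X = f"
  using cmp_id_right by blast
lemma cmp_idL: "c_arr C f \<Longrightarrow> c_cod C f = X \<Longrightarrow> I X \<cdot> f = f"
  using cmp_id_left by blast
lemma tm_assoc': "\<lbrakk>c_arr C f; c_arr C g; c_arr C h\<rbrakk> \<Longrightarrow> (f \<otimes> g) \<otimes> h = f \<otimes> (g \<otimes> h)"
  using tmor_assoc by simp
lemma II_tm: "c_arr C f \<Longrightarrow> I X \<otimes> (I Y \<otimes> f) = I (X \<odot> Y) \<otimes> f"
  using tmor_assoc[of "I X" "I Y" f] by simp
lemma tm_unitL: "c_arr C f \<Longrightarrow> I K \<otimes> f = f" using tmor_unit_left by blast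
lemma tm_unitR: "c_arr C f \<Longrightarrow> f \<otimes> I K = f" using tmor_unit_right by blast
lemma I_dist_L: "c_arr C f \<Longrightarrow> c_arr C g \<Longrightarrow> c_dom C g = c_cod C f \<Longrightarrow> I X \<otimes> (g \<cdot> f) = (I X \<otimes> g) \<cdot> (I X \<otimes> f)"
  using interchange[of "I X" "I X" f g] cmp_idL[of "I X" X] by simp
lemma I_dist_R: "c_arr C f \<Longrightarrow> c_arr C g \<Longrightarrow> c_dom C g = c_cod C f \<Longrightarrow> (g \<cdot> f) \<otimes> I X = (g \<otimes> I X) \<cdot> (f \<otimes> I X)"
  using interchange[of f g "I X" "I X"] cmp_idL[of "I X" X] by simp
lemma tens_split: "c_arr C f \<Longrightarrow> c_arr C g \<Longrightarrow> f \<otimes> g = (f \<otimes> I (c_cod C g)) \<cdot> (I (c_dom C f) \<otimes> g)"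
  using interchange[of "I (c_dom C f)" f g "I (c_cod C g)"] cmp_idL[of g] cmp_idR[of f] by simp
lemma tens_split2: "c_arr C f \<Longrightarrow> c_arr C g \<Longrightarrow> f \<otimes> g = (I (c_cod C f) \<otimes> g) \<cdot> (f \<otimes> I (c_dom C g))"
  using interchange[of f "I (c_cod C f)" "I (c_dom C g)" g] cmp_idL[of f] cmp_idR[of g] by simp

lemmas NS = cmp_assoc' cmp_idR cmp_idL tm_assoc' II_tm tm_unitL tm_unitR I_dist_L I_dist_R

fun ob :: "'o list \<Rightarrow> 'o" where
  "ob [] = K" | "ob (x # xs) = x \<odot> ob xs"

lemma ob_append[simp]: "ob (xs @ ys) = ob xs \<odot> ob ys"
  by (induction xs) auto

type_synonym ('a,'b) layer = "'a list \<times> 'b \<times> 'a list \<times> 'a list \<times> 'a list"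

fun lay :: "('o,'m) layer \<Rightarrow> 'm" where
  "lay (ps,f,ds,cs,qs) = I (ob ps) \<otimes> (f \<otimes> I (ob qs))"
fun lok :: "('o,'m) layer \<Rightarrow> bool" where
  "lok (ps,f,ds,cs,qs) = hom f (ob ds) (ob cs)"
fun ldom :: "('o,'m) layer \<Rightarrow> 'o list" where
  "ldom (ps,f,ds,cs,qs) = ps @ ds @ qs"
fun lcod :: "('o,'m) layer \<Rightarrow> 'o list" where
  "lcod (ps,f,ds,cs,qs) = ps @ cs @ qs"
fun wh :: "'o list \<Rightarrow> 'o list \<Rightarrow> ('o,'m) layer \<Rightarrow> ('o,'m) layer" where
  "wh P Q (ps,f,ds,cs,qs) = (P @ ps, f, ds, cs, qs @ Q)"
fun ch :: "'o list \<Rightarrow> ('o,'m) layer list \<Rightarrow> 'm" where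
  "ch X [] = I (ob X)" | "ch X (l # ls) = lay l \<cdot> ch X ls"
fun cd :: "'o list \<Rightarrow> ('o,'m) layer list \<Rightarrow> 'o list" where
  "cd X [] = X" | "cd X (l # ls) = lcod l"
fun valid :: "'o list \<Rightarrow> ('o,'m) layer list \<Rightarrow> bool" where
  "valid X [] = True" | "valid X (l # ls) = (valid X ls \<and> lok l \<and> ldom l = cd X ls)"
fun sw :: "('o,'m) layer \<Rightarrow> ('o,'m) layer \<Rightarrow> ('o,'m) layer list" where
  "sw (ps1,f,df,cf,qs1) (ps2,g,dg,cg,qs2) = (if length ps2 + length cg \<le> length ps1 then
     [(ps2,g,dg,cg,drop (length ps2 + length cg) ps1 @ cf @ qs1),
      (ps2 @ dg @ drop (length ps2 + length cg) ps1,f,df,cf,qs1)]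
   else [(ps1 @ cf @ drop (length ps1 + length df) ps2,g,dg,cg,qs2),
         (ps1,f,df,cf,drop (length ps1 + length df) ps2 @ dg @ qs2)])"
fun disj :: "('o,'m) layer \<Rightarrow> ('o,'m) layer \<Rightarrow> bool" where
  "disj (ps1,f,df,cf,qs1) (ps2,g,dg,cg,qs2) =
     (length ps2 + length cg \<le> length ps1 \<or> length ps1 + length df \<le> length ps2)"

declare ch.simps[simp del] lay.simps[simp del] sw.simps[simp del]

definition eqn :: "'o list \<Rightarrow> ('o,'m) layer list \<Rightarrow> ('o,'m) layer list \<Rightarrow> bool" where
  "eqn D xs ys \<longleftrightarrow> valid D xs \<and> valid D ys \<and> cd D xs = cd D ys \<and> ch D xs = ch D ys"

lemma eqn_sym: "eqn D xs ys \<Longrightarrow> eqn D ys xs"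
  unfolding eqn_def by auto

lemma lay_arr: "lok l \<Longrightarrow> c_arr C (lay l) \<and> c_dom C (lay l) = ob (ldom l) \<and> c_cod C (lay l) = ob (lcod l)"
  by (cases l) (auto simp: lay.simps hom_def)

lemma ch_arr: "valid X ls \<Longrightarrow> c_arr C (ch X ls) \<and> c_dom C (ch X ls) = ob X \<and> c_cod C (ch X ls) = ob (cd X ls)"
proof (induction ls)
  case Nil then show ?case by (simp add: ch.simps)
next
  case (Cons l ls)
  then have v: "valid X ls" "lok l" "ldom l = cd X ls" by auto
  from Cons.IH[OF v(1)] lay_arr[OF v(2)] v(3) show ?case by (simp add: ch.simps)
qed

lemma cd_append[simp]: "cd X (xs @ ys) = cd (cd X ys) xs"
  by (cases xs) auto

lemma valid_append[simp]: "valid X (xs @ ys) \<longleftrightarrow> valid X ys \<and> valid (cd X ys) xs"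
  by (induction xs) auto

lemma ch_append: "valid X (xs @ ys) \<Longrightarrow> ch X (xs @ ys) = ch (cd X ys) xs \<cdot> ch X ys"
proof (induction xs)
  case Nil
  then show ?case using ch_arr[of X ys] by (simp add: ch.simps cmp_idL)
next
  case (Cons l xs)
  then have v: "valid X ys" "valid (cd X ys) xs" "lok l" "ldom l = cd (cd X ys) xs" by auto
  have "ch X ((l # xs) @ ys) = lay l \<cdot> (ch (cd X ys) xs \<cdot> ch X ys)"
    using Cons by (simp add: ch.simps)
  also have "\<dots> = (lay l \<cdot> ch (cd X ys) xs) \<cdot> ch X ys"
    using ch_arr[OF v(1)] ch_arr[OF v(2)] lay_arr[OF v(3)] v(4) cmp_assoc by simp
  finally show ?case by (simp add: ch.simps)
qed

lemma lok_wh[simp]: "lok (wh P Q l) = lok l" by (cases l) auto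
lemma ldom_wh[simp]: "ldom (wh P Q l) = P @ ldom l @ Q" by (cases l) auto
lemma lcod_wh[simp]: "lcod (wh P Q l) = P @ lcod l @ Q" by (cases l) auto

lemma valid_wh: "valid X xs \<Longrightarrow> valid (P @ X @ Q) (map (wh P Q) xs) \<and> cd (P @ X @ Q) (map (wh P Q) xs) = P @ cd X xs @ Q"
  by (induction xs) auto

lemma I_ob_app: "c_arr C h \<Longrightarrow> I (ob xs \<odot> ob ys) \<otimes> h = I (ob xs) \<otimes> (I (ob ys) \<otimes> h)"
  by (simp add: II_tm)

lemma lay_wh: "lok l \<Longrightarrow> lay (wh P Q l) = I (ob P) \<otimes> (lay l \<otimes> I (ob Q))"
proof (cases l)
  case (fields ps f ds cs qs)
  assume "lok l"
  then have af: "c_arr C f" using fields by (simp add: hom_def)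
  have "lay (wh P Q l) = I (ob P \<odot> ob ps) \<otimes> (f \<otimes> (I (ob qs) \<otimes> I (ob Q)))"
    using fields by (simp add: lay.simps del: tobj_assoc)
  also have "\<dots> = I (ob P) \<otimes> (I (ob ps) \<otimes> (f \<otimes> (I (ob qs) \<otimes> I (ob Q))))"
    using af by (simp add: II_tm del: tobj_assoc tmor_id)
  also have "\<dots> = I (ob P) \<otimes> ((I (ob ps) \<otimes> (f \<otimes> I (ob qs))) \<otimes> I (ob Q))"
    using af by (simp add: tm_assoc' del: tobj_assoc tmor_id)
  finally show ?thesis using fields by (simp add: lay.simps del: tobj_assoc tmor_id)
qed

lemma ch_wh: "valid X xs \<Longrightarrow> ch (P @ X @ Q) (map (wh P Q) xs) = I (ob P) \<otimes> (ch X xs \<otimes> I (ob Q))"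
proof (induction xs)
  case Nil
  then show ?case by (simp add: ch.simps del: tobj_assoc)
next
  case (Cons l xs)
  then have v: "valid X xs" "lok l" "ldom l = cd X xs" by auto
  note a1 = ch_arr[OF v(1)] and a2 = lay_arr[OF v(2)]
  have "ch (P @ X @ Q) (map (wh P Q) (l # xs)) = (I (ob P) \<otimes> (lay l \<otimes> I (ob Q))) \<cdot> (I (ob P) \<otimes> (ch X xs \<otimes> I (ob Q)))"
    using Cons v by (simp add: ch.simps lay_wh)
  also have "\<dots> = I (ob P) \<otimes> ((lay l \<otimes> I (ob Q)) \<cdot> (ch X xs \<otimes> I (ob Q)))"
    using a1 a2 v(3) interchange[of "I (ob P)" "I (ob P)"] by (simp add: cmp_idL)
  also have "\<dots> = I (ob P) \<otimes> ((lay l \<cdot> ch X xs) \<otimes> I (ob Q))"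
    using a1 a2 v(3) interchange[of _ _ "I (ob Q)" "I (ob Q)"] by (simp add: cmp_idL)
  finally show ?case by (simp add: ch.simps)
qed



lemma replace:
  assumes v: "valid X (pre @ map (wh P Q) lhs @ post)" and e: "eqn D lhs rhs" and c: "cd X post = P @ D @ Q"
  shows "ch X (pre @ map (wh P Q) lhs @ post) = ch X (pre @ map (wh P Q) rhs @ post)
         \<and> valid X (pre @ map (wh P Q) rhs @ post)"
proof -
  from e have el: "valid D lhs" and er: "valid D rhs" and ec: "cd D lhs = cd D rhs" and eq: "ch D lhs = ch D rhs"
    unfolding eqn_def by auto
  from v have vp: "valid X post" by simp
  note wl = valid_wh[OF el, of P Q] and wr = valid_wh[OF er, of P Q]
  have vr: "valid X (pre @ map (wh P Q) rhs @ post)"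
    using v c wl wr ec by simp
  have "ch X (pre @ map (wh P Q) lhs @ post) = ch (cd X (map (wh P Q) lhs @ post)) pre \<cdot> (ch (cd X post) (map (wh P Q) lhs) \<cdot> ch X post)"
    using v ch_append[of X pre "map (wh P Q) lhs @ post"] ch_append[of X "map (wh P Q) lhs" post] by simp
  also have "\<dots> = ch (cd X (map (wh P Q) rhs @ post)) pre \<cdot> (ch (cd X post) (map (wh P Q) rhs) \<cdot> ch X post)"
    using c ch_wh[OF el, of P Q] ch_wh[OF er, of P Q] eq wl wr ec by simp
  also have "\<dots> = ch X (pre @ map (wh P Q) rhs @ post)"
    using vr ch_append[of X pre "map (wh P Q) rhs @ post"] ch_append[of X "map (wh P Q) rhs" post] by simp
  finally show ?thesis using vr by simp
qed

lemma rep_step: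
  assumes e: "eqn D lhs rhs"
    and v: "valid X xs"
    and m: "take (length lhs) (drop n xs) = map (wh P Q) lhs"
    and l: "n + length lhs \<le> length xs"
    and c: "cd X (drop (n + length lhs) xs) = P @ D @ Q"
    and r: "ch X (take n xs @ map (wh P Q) rhs @ drop (n + length lhs) xs) = R"
  shows "ch X xs = R"
proof -
  have xs: "xs = take n xs @ map (wh P Q) lhs @ drop (n + length lhs) xs"
    using m l by (metis append_take_drop_id drop_drop add.commute)
  have "ch X xs = ch X (take n xs @ map (wh P Q) rhs @ drop (n + length lhs) xs)"
    using replace[of X "take n xs" P Q lhs "drop (n + length lhs) xs" D rhs] v e c xs by simp
  then show ?thesis using r by simp
qed

lemma I_ob_tm: "c_arr C h \<Longrightarrow> I (ob (xs @ ys)) \<otimes> h = I (ob xs) \<otimes> (I (ob ys) \<otimes> h)"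
  by (simp add: II_tm)

lemma interch1: "c_arr C g \<Longrightarrow> c_arr C h \<Longrightarrow> (I (c_cod C g) \<otimes> h) \<cdot> (g \<otimes> I (c_dom C h)) = g \<otimes> h"
  using tens_split2[of g h] by metis
lemma interch2: "c_arr C g \<Longrightarrow> c_arr C h \<Longrightarrow> (g \<otimes> I (c_cod C h)) \<cdot> (I (c_dom C g) \<otimes> h) = g \<otimes> h"
  using tens_split[of g h] by metis

lemma ch2: "lok b \<Longrightarrow> ch (ldom b) [a, b] = lay a \<cdot> lay b"
  using lay_arr[of b] by (simp add: ch.simps cmp_idR)

lemma sw_eqn:
  assumes l1: "lok l1" and l2: "lok l2" and d: "ldom l1 = lcod l2" and dj: "disj l1 l2"
  shows "eqn (ldom l2) [l1, l2] (sw l1 l2)"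
proof -
  obtain ps1 f df cf qs1 where L1: "l1 = (ps1,f,df,cf,qs1)" by (cases l1)
  obtain ps2 g dg cg qs2 where L2: "l2 = (ps2,g,dg,cg,qs2)" by (cases l2)
  from l1 L1 have af: "c_arr C f" "c_dom C f = ob df" "c_cod C f = ob cf" by (auto simp: hom_def)
  from l2 L2 have ag: "c_arr C g" "c_dom C g = ob dg" "c_cod C g = ob cg" by (auto simp: hom_def)
  from d L1 L2 have d': "ps1 @ df @ qs1 = ps2 @ cg @ qs2" by simp
  show ?thesis
  proof (cases "length ps2 + length cg \<le> length ps1")
    case True
    define M where "M = drop (length ps2 + length cg) ps1"
    have t: "take (length ps2 + length cg) (ps1 @ df @ qs1) = ps2 @ cg" using d' by simp
    then have "take (length ps2 + length cg) ps1 = ps2 @ cg" using True by simp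
    then have p1: "ps1 = ps2 @ cg @ M" unfolding M_def by (metis append_take_drop_id append.assoc)
    have q2: "qs2 = M @ df @ qs1"
      using arg_cong[OF d', of "drop (length ps2 + length cg)"] True unfolding M_def by simp
    have sw: "sw l1 l2 = [(ps2,g,dg,cg,M @ cf @ qs1), (ps2 @ dg @ M,f,df,cf,qs1)]"
      using True L1 L2 by (simp add: sw.simps M_def)
    define h where "h = I (ob M) \<otimes> (f \<otimes> I (ob qs1))"
    have ah: "c_arr C h" "c_dom C h = ob M \<odot> (ob df \<odot> ob qs1)" "c_cod C h = ob M \<odot> (ob cf \<odot> ob qs1)"
      using af unfolding h_def by (simp_all del: tobj_assoc)
    have e1: "lay l1 = I (ob ps2) \<otimes> (I (ob cg) \<otimes> h)"
      using L1 p1 af unfolding h_def by (simp add: lay.simps II_tm del: tobj_assoc tmor_id)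
    have e2: "lay l2 = I (ob ps2) \<otimes> (g \<otimes> I (c_dom C h))"
      using L2 q2 ah unfolding h_def by (simp add: lay.simps del: tobj_assoc)
    have e3: "lay (ps2,g,dg,cg,M @ cf @ qs1) = I (ob ps2) \<otimes> (g \<otimes> I (c_cod C h))"
      using ah by (simp add: lay.simps del: tobj_assoc)
    have e4: "lay (ps2 @ dg @ M,f,df,cf,qs1) = I (ob ps2) \<otimes> (I (ob dg) \<otimes> h)"
      using af unfolding h_def by (simp add: lay.simps II_tm del: tobj_assoc tmor_id)
    have "lay l1 \<cdot> lay l2 = I (ob ps2) \<otimes> ((I (ob cg) \<otimes> h) \<cdot> (g \<otimes> I (c_dom C h)))"
      using e1 e2 ah ag interchange[of "I (ob ps2)" "I (ob ps2)"] by (simp add: cmp_idL)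
    also have "\<dots> = I (ob ps2) \<otimes> ((g \<otimes> I (c_cod C h)) \<cdot> (I (ob dg) \<otimes> h))"
      using interch1[of g h] interch2[of g h] ag ah by simp
    also have "\<dots> = lay (ps2,g,dg,cg,M @ cf @ qs1) \<cdot> lay (ps2 @ dg @ M,f,df,cf,qs1)"
      using e3 e4 ah ag interchange[of "I (ob ps2)" "I (ob ps2)"] by (simp add: cmp_idL)
    finally have eq: "lay l1 \<cdot> lay l2 = lay (ps2,g,dg,cg,M @ cf @ qs1) \<cdot> lay (ps2 @ dg @ M,f,df,cf,qs1)" .
    have lk: "lok (ps2 @ dg @ M,f,df,cf,qs1)" using af by (simp add: hom_def)
    show ?thesis unfolding eqn_def sw using l1 l2 L1 L2 p1 q2 af ag eq ch2[of l2 l1] ch2[OF lk, of "(ps2,g,dg,cg,M @ cf @ qs1)"]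
      by (simp add: hom_def)
  next
    case False
    with dj L1 L2 have F: "length ps1 + length df \<le> length ps2" by simp
    define M where "M = drop (length ps1 + length df) ps2"
    have "take (length ps1 + length df) (ps2 @ cg @ qs2) = ps1 @ df" using d'[symmetric] by simp
    then have "take (length ps1 + length df) ps2 = ps1 @ df" using F by simp
    then have p2: "ps2 = ps1 @ df @ M" unfolding M_def by (metis append_take_drop_id append.assoc)
    have q1: "qs1 = M @ cg @ qs2"
      using arg_cong[OF d'[symmetric], of "drop (length ps1 + length df)"] F unfolding M_def by simp
    have sw: "sw l1 l2 = [(ps1 @ cf @ M,g,dg,cg,qs2), (ps1,f,df,cf,M @ dg @ qs2)]"
      using False L1 L2 by (simp add: sw.simps M_def)
    define k where "k = I (ob M) \<otimes> (g \<otimes> I (ob qs2))"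
    have ak: "c_arr C k" "c_dom C k = ob M \<odot> (ob dg \<odot> ob qs2)" "c_cod C k = ob M \<odot> (ob cg \<odot> ob qs2)"
      using ag unfolding k_def by (simp_all del: tobj_assoc)
    have e1: "lay l1 = I (ob ps1) \<otimes> (f \<otimes> I (c_cod C k))"
      using L1 q1 ak by (simp add: lay.simps del: tobj_assoc)
    have e2: "lay l2 = I (ob ps1) \<otimes> (I (ob df) \<otimes> k)"
      using L2 p2 ag unfolding k_def by (simp add: lay.simps II_tm del: tobj_assoc tmor_id)
    have e3: "lay (ps1 @ cf @ M,g,dg,cg,qs2) = I (ob ps1) \<otimes> (I (ob cf) \<otimes> k)"
      using ag unfolding k_def by (simp add: lay.simps II_tm del: tobj_assoc tmor_id)
    have e4: "lay (ps1,f,df,cf,M @ dg @ qs2) = I (ob ps1) \<otimes> (f \<otimes> I (c_dom C k))"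
      using ak by (simp add: lay.simps del: tobj_assoc)
    have "lay l1 \<cdot> lay l2 = I (ob ps1) \<otimes> ((f \<otimes> I (c_cod C k)) \<cdot> (I (ob df) \<otimes> k))"
      using e1 e2 ak af interchange[of "I (ob ps1)" "I (ob ps1)"] by (simp add: cmp_idL)
    also have "\<dots> = I (ob ps1) \<otimes> ((I (ob cf) \<otimes> k) \<cdot> (f \<otimes> I (c_dom C k)))"
      using interch1[of f k] interch2[of f k] af ak by simp
    also have "\<dots> = lay (ps1 @ cf @ M,g,dg,cg,qs2) \<cdot> lay (ps1,f,df,cf,M @ dg @ qs2)"
      using e3 e4 ak af interchange[of "I (ob ps1)" "I (ob ps1)"] by (simp add: cmp_idL)
    finally have eq: "lay l1 \<cdot> lay l2 = lay (ps1 @ cf @ M,g,dg,cg,qs2) \<cdot> lay (ps1,f,df,cf,M @ dg @ qs2)" .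
    have lk: "lok (ps1,f,df,cf,M @ dg @ qs2)" using af by (simp add: hom_def)
    show ?thesis unfolding eqn_def sw using l1 l2 L1 L2 p2 q1 af ag eq ch2[of l2 l1] ch2[OF lk, of "(ps1 @ cf @ M,g,dg,cg,qs2)"]
      by (simp add: hom_def)
  qed
qed

lemma swp_step:
  assumes v: "valid X xs" and l: "Suc n < length xs" and dj: "disj (xs ! n) (xs ! Suc n)"
    and r: "ch X (take n xs @ sw (xs ! n) (xs ! Suc n) @ drop (Suc (Suc n)) xs) = R"
  shows "ch X xs = R"
proof -
  have xs: "take 2 (drop n xs) = [xs ! n, xs ! Suc n]"
    using l by (metis Cons_nth_drop_Suc Suc_lessD take_0 take_Suc_Cons numeral_2_eq_2)
  have vv: "valid (cd X (drop (n + 2) xs)) (take 2 (drop n xs))"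
    using v valid_append[of X "take (n+2) xs" "drop (n+2) xs"]
    by (metis append_take_drop_id take_drop valid_append add.commute)
  then have h: "lok (xs ! n)" "lok (xs ! Suc n)" "ldom (xs ! n) = lcod (xs ! Suc n)"
       "ldom (xs ! Suc n) = cd X (drop (n + 2) xs)"
    using xs by simp_all
  have e: "eqn (ldom (xs ! Suc n)) [xs ! n, xs ! Suc n] (sw (xs ! n) (xs ! Suc n))"
    using sw_eqn[OF h(1,2,3) dj] .
  have c: "cd X (drop (n + 2) xs) = [] @ ldom (xs ! Suc n) @ []"
    using h(4) by simp
  have m: "take (length [xs ! n, xs ! Suc n]) (drop n xs) = map (wh [] []) [xs ! n, xs ! Suc n]"
    using xs by (cases "xs ! n", cases "xs ! Suc n") (simp add: numeral_2_eq_2)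
  have mm: "map (wh [] []) (sw (xs ! n) (xs ! Suc n)) = sw (xs ! n) (xs ! Suc n)"
  proof -
    have "\<And>l. wh [] [] l = l" by (case_tac l) simp
    then show ?thesis by (simp add: map_idI)
  qed
  show ?thesis
    apply (rule rep_step[OF e v m])
    using l c r mm by (simp_all add: numeral_2_eq_2)
qed

end

locale setting = strict_monoidal_cat C for C :: "('o, 'm) smcat" +
  fixes A V W :: 'o and eta mu psiV sigmaV psiW sigmaW Delta tau :: 'm
  assumes qV: "quadruple A eta mu V psiV sigmaV"
    and qW: "quadruple A eta mu W psiW sigmaW"
    and twV: "twisted A eta mu V psiV sigmaV"
    and cocV: "cocycle A eta mu V psiV sigmaV"
    and twW: "twisted A eta mu W psiW sigmaW"
    and cocW: "cocycle A eta mu W psiW sigmaW"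
    and lk: "link_morphism A eta mu V psiV W psiW Delta"
    and tm: "twisting_morphism A mu V psiV sigmaV W psiW sigmaW tau"
    and sg1: "sigma_tensor A mu V psiV sigmaV W sigmaW tau
           = sigma_tensor A mu V psiV sigmaV W sigmaW tau \<cdot> (Delta \<otimes> I (V \<odot> W))"
    and sg2: "sigma_tensor A mu V psiV sigmaV W sigmaW tau
           = sigma_tensor A mu V psiV sigmaV W sigmaW tau \<cdot> (I (V \<odot> W) \<otimes> Delta)"
    and sg3: "sigma_tensor A mu V psiV sigmaV W sigmaW tau
           = (I A \<otimes> Delta) \<cdot> sigma_tensor A mu V psiV sigmaV W sigmaW tau"
begin

declare sw.simps[simp]

lemma homs: "hom eta K A" "hom mu (A \<odot> A) A" "hom psiV (V \<odot> A) (A \<odot> V)" "hom sigmaV (V \<odot> V) (A \<odot> V)"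
  "hom psiW (W \<odot> A) (A \<odot> W)" "hom sigmaW (W \<odot> W) (A \<odot> W)" "hom Delta (V \<odot> W) (V \<odot> W)"
  "hom tau (W \<odot> V) (V \<odot> W)"
  using qV qW lk tm unfolding quadruple_def monoid_def link_morphism_def twisting_morphism_def by auto

lemma atoms[simp]:
  "c_arr C eta" "c_dom C eta = K" "c_cod C eta = A"
  "c_arr C mu" "c_dom C mu = A \<odot> A" "c_cod C mu = A"
  "c_arr C psiV" "c_dom C psiV = V \<odot> A" "c_cod C psiV = A \<odot> V"
  "c_arr C sigmaV" "c_dom C sigmaV = V \<odot> V" "c_cod C sigmaV = A \<odot> V"
  "c_arr C psiW" "c_dom C psiW = W \<odot> A" "c_cod C psiW = A \<odot> W"
  "c_arr C sigmaW" "c_dom C sigmaW = W \<odot> W" "c_cod C sigmaW = A \<odot> W"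
  "c_arr C Delta" "c_dom C Delta = V \<odot> W" "c_cod C Delta = V \<odot> W"
  "c_arr C tau" "c_dom C tau = W \<odot> V" "c_cod C tau = V \<odot> W"
  using homs unfolding hom_def by auto

lemma homs'[simp]: "hom eta K A" "hom mu (A \<odot> A) A" "hom psiV (V \<odot> A) (A \<odot> V)" "hom sigmaV (V \<odot> V) (A \<odot> V)"
  "hom psiW (W \<odot> A) (A \<odot> W)" "hom sigmaW (W \<odot> W) (A \<odot> W)" "hom Delta (V \<odot> W) (V \<odot> W)"
  "hom tau (W \<odot> V) (V \<odot> W)" using homs by auto

lemma mon_assoc: "mu \<cdot> (mu \<otimes> I A) = mu \<cdot> (I A \<otimes> mu)"
  and mon_unitL: "mu \<cdot> (eta \<otimes> I A) = I A" and mon_unitR: "mu \<cdot> (I A \<otimes> eta) = I A"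
  using qV unfolding quadruple_def monoid_def by auto

lemma qV_pm: "(mu \<otimes> I V) \<cdot> (I A \<otimes> psiV) \<cdot> (psiV \<otimes> I A) = psiV \<cdot> (I V \<otimes> mu)"
  and qV_nab: "nabla A eta mu V psiV \<cdot> sigmaV = sigmaV"
  using qV unfolding quadruple_def by auto
lemma qW_pm: "(mu \<otimes> I W) \<cdot> (I A \<otimes> psiW) \<cdot> (psiW \<otimes> I A) = psiW \<cdot> (I W \<otimes> mu)"
  and qW_nab: "nabla A eta mu W psiW \<cdot> sigmaW = sigmaW"
  using qW unfolding quadruple_def by auto
lemma lk1: "psi_tensor A V W psiV psiW Delta = (I A \<otimes> Delta) \<cdot> psi_tensor A V W psiV psiW Delta"
  and lk2: "psi_tensor A V W psiV psiW Delta =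
       nabla A eta mu (V \<odot> W) (psi_tensor A V W psiV psiW Delta) \<cdot> (psiV \<otimes> I W) \<cdot> (I V \<otimes> psiW)"
  using lk unfolding link_morphism_def by auto
lemma tm1: "(psiV \<otimes> I W) \<cdot> (I V \<otimes> psiW) \<cdot> (tau \<otimes> I A) = (I A \<otimes> tau) \<cdot> (psiW \<otimes> I V) \<cdot> (I W \<otimes> psiV)"
  and tm2: "(mu \<otimes> I V \<otimes> I W) \<cdot> (I A \<otimes> sigmaV \<otimes> I W) \<cdot> (psiV \<otimes> tau) \<cdot> (I V \<otimes> sigmaW \<otimes> I V) \<cdot> (tau \<otimes> I W \<otimes> I V)
   = (mu \<otimes> I V \<otimes> I W) \<cdot> (I A \<otimes> psiV \<otimes> I W) \<cdot> (I A \<otimes> I V \<otimes> sigmaW) \<cdot> (I A \<otimes> tau \<otimes> I W)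
       \<cdot> (psiW \<otimes> I V \<otimes> I W) \<cdot> (I W \<otimes> sigmaV \<otimes> I W) \<cdot> (I W \<otimes> I V \<otimes> tau)"
  using tm unfolding twisting_morphism_def by auto

lemma R_assoc: "eqn [A,A,A]
   [([],mu,[A,A],[A],[]), ([],mu,[A,A],[A],[A])]
   [([],mu,[A,A],[A],[]), ([A],mu,[A,A],[A],[])]"
  using mon_assoc unfolding eqn_def  by (simp add: ch.simps lay.simps NS)

lemma R_unitL: "eqn [A]
   [([],mu,[A,A],[A],[]), ([],eta,[],[A],[A])]
   []"
  using mon_unitL unfolding eqn_def  by (simp add: ch.simps lay.simps NS)

lemma R_unitR: "eqn [A]
   [([],mu,[A,A],[A],[]), ([A],eta,[],[A],[])]
   []"
  using mon_unitR unfolding eqn_def  by (simp add: ch.simps lay.simps NS)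

lemma R_pmV: "eqn [V,A,A]
   [([],mu,[A,A],[A],[V]), ([A],psiV,[V,A],[A,V],[]), ([],psiV,[V,A],[A,V],[A])]
   [([],psiV,[V,A],[A,V],[]), ([V],mu,[A,A],[A],[])]"
  using qV_pm unfolding eqn_def  by (simp add: ch.simps lay.simps NS)

lemma R_nabV: "eqn [V,V]
   [([],mu,[A,A],[A],[V]), ([A],psiV,[V,A],[A,V],[]), ([A,V],eta,[],[A],[]), ([],sigmaV,[V,V],[A,V],[])]
   [([],sigmaV,[V,V],[A,V],[])]"
  using qV_nab unfolding eqn_def nabla_def by (simp add: ch.simps lay.simps NS)

lemma R_twV: "eqn [V,V,A]
   [([],mu,[A,A],[A],[V]), ([A],psiV,[V,A],[A,V],[]), ([],sigmaV,[V,V],[A,V],[A])]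
   [([],mu,[A,A],[A],[V]), ([A],sigmaV,[V,V],[A,V],[]), ([],psiV,[V,A],[A,V],[V]), ([V],psiV,[V,A],[A,V],[])]"
  using twV unfolding eqn_def twisted_def by (simp add: ch.simps lay.simps NS)

lemma R_cocV: "eqn [V,V,V]
   [([],mu,[A,A],[A],[V]), ([A],sigmaV,[V,V],[A,V],[]), ([],sigmaV,[V,V],[A,V],[V])]
   [([],mu,[A,A],[A],[V]), ([A],sigmaV,[V,V],[A,V],[]), ([],psiV,[V,A],[A,V],[V]), ([V],sigmaV,[V,V],[A,V],[])]"
  using cocV unfolding eqn_def cocycle_def by (simp add: ch.simps lay.simps NS)

lemma R_pmW: "eqn [W,A,A]
   [([],mu,[A,A],[A],[W]), ([A],psiW,[W,A],[A,W],[]), ([],psiW,[W,A],[A,W],[A])]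
   [([],psiW,[W,A],[A,W],[]), ([W],mu,[A,A],[A],[])]"
  using qW_pm unfolding eqn_def  by (simp add: ch.simps lay.simps NS)

lemma R_nabW: "eqn [W,W]
   [([],mu,[A,A],[A],[W]), ([A],psiW,[W,A],[A,W],[]), ([A,W],eta,[],[A],[]), ([],sigmaW,[W,W],[A,W],[])]
   [([],sigmaW,[W,W],[A,W],[])]"
  using qW_nab unfolding eqn_def nabla_def by (simp add: ch.simps lay.simps NS)

lemma R_twW: "eqn [W,W,A]
   [([],mu,[A,A],[A],[W]), ([A],psiW,[W,A],[A,W],[]), ([],sigmaW,[W,W],[A,W],[A])]
   [([],mu,[A,A],[A],[W]), ([A],sigmaW,[W,W],[A,W],[]), ([],psiW,[W,A],[A,W],[W]), ([W],psiW,[W,A],[A,W],[])]"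
  using twW unfolding eqn_def twisted_def by (simp add: ch.simps lay.simps NS)

lemma R_cocW: "eqn [W,W,W]
   [([],mu,[A,A],[A],[W]), ([A],sigmaW,[W,W],[A,W],[]), ([],sigmaW,[W,W],[A,W],[W])]
   [([],mu,[A,A],[A],[W]), ([A],sigmaW,[W,W],[A,W],[]), ([],psiW,[W,A],[A,W],[W]), ([W],sigmaW,[W,W],[A,W],[])]"
  using cocW unfolding eqn_def cocycle_def by (simp add: ch.simps lay.simps NS)

lemma R_T1: "eqn [W,V,A]
   [([],psiV,[V,A],[A,V],[W]), ([V],psiW,[W,A],[A,W],[]), ([],tau,[W,V],[V,W],[A])]
   [([A],tau,[W,V],[V,W],[]), ([],psiW,[W,A],[A,W],[V]), ([W],psiV,[V,A],[A,V],[])]"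
  using tm1 unfolding eqn_def  by (simp add: ch.simps lay.simps NS)

lemma R_T2: "eqn [W,V,W,V]
   [([],mu,[A,A],[A],[V,W]), ([A],sigmaV,[V,V],[A,V],[W]), ([],psiV,[V,A],[A,V],[V,W]), ([V,A],tau,[W,V],[V,W],[]), ([V],sigmaW,[W,W],[A,W],[V]), ([],tau,[W,V],[V,W],[W,V])]
   [([],mu,[A,A],[A],[V,W]), ([A],psiV,[V,A],[A,V],[W]), ([A,V],sigmaW,[W,W],[A,W],[]), ([A],tau,[W,V],[V,W],[W]), ([],psiW,[W,A],[A,W],[V,W]), ([W],sigmaV,[V,V],[A,V],[W]), ([W,V],tau,[W,V],[V,W],[])]"
  using tm2 unfolding eqn_def  by (simp add: ch.simps lay.simps NS tens_split[of psiV tau])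

lemma R_L1: "eqn [V,W,A]
   [([],psiV,[V,A],[A,V],[W]), ([V],psiW,[W,A],[A,W],[]), ([],Delta,[V,W],[V,W],[A])]
   [([A],Delta,[V,W],[V,W],[]), ([],psiV,[V,A],[A,V],[W]), ([V],psiW,[W,A],[A,W],[]), ([],Delta,[V,W],[V,W],[A])]"
  using lk1 unfolding eqn_def psi_tensor_def by (simp add: ch.simps lay.simps NS)

lemma R_L2: "eqn [V,W,A]
   [([],psiV,[V,A],[A,V],[W]), ([V],psiW,[W,A],[A,W],[]), ([],Delta,[V,W],[V,W],[A])]
   [([],mu,[A,A],[A],[V,W]), ([A],psiV,[V,A],[A,V],[W]), ([A,V],psiW,[W,A],[A,W],[]), ([A],Delta,[V,W],[V,W],[A]), ([A,V,W],eta,[],[A],[]), ([],psiV,[V,A],[A,V],[W]), ([V],psiW,[W,A],[A,W],[])]"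
  using lk2 unfolding eqn_def psi_tensor_def nabla_def by (simp add: ch.simps lay.simps NS)

lemma R_S1: "eqn [V,W,V,W]
   [([],mu,[A,A],[A],[V,W]), ([A],psiV,[V,A],[A,V],[W]), ([],sigmaV,[V,V],[A,V],[A,W]), ([V,V],sigmaW,[W,W],[A,W],[]), ([V],tau,[W,V],[V,W],[W])]
   [([],mu,[A,A],[A],[V,W]), ([A],psiV,[V,A],[A,V],[W]), ([],sigmaV,[V,V],[A,V],[A,W]), ([V,V],sigmaW,[W,W],[A,W],[]), ([V],tau,[W,V],[V,W],[W]), ([],Delta,[V,W],[V,W],[V,W])]"
  using sg1 unfolding eqn_def sigma_tensor_def by (simp add: ch.simps lay.simps NS tens_split[of sigmaV sigmaW])

lemma R_S2: "eqn [V,W,V,W]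
   [([],mu,[A,A],[A],[V,W]), ([A],psiV,[V,A],[A,V],[W]), ([],sigmaV,[V,V],[A,V],[A,W]), ([V,V],sigmaW,[W,W],[A,W],[]), ([V],tau,[W,V],[V,W],[W])]
   [([],mu,[A,A],[A],[V,W]), ([A],psiV,[V,A],[A,V],[W]), ([],sigmaV,[V,V],[A,V],[A,W]), ([V,V],sigmaW,[W,W],[A,W],[]), ([V],tau,[W,V],[V,W],[W]), ([V,W],Delta,[V,W],[V,W],[])]"
  using sg2 unfolding eqn_def sigma_tensor_def by (simp add: ch.simps lay.simps NS tens_split[of sigmaV sigmaW])

lemma R_S3: "eqn [V,W,V,W]
   [([],mu,[A,A],[A],[V,W]), ([A],psiV,[V,A],[A,V],[W]), ([],sigmaV,[V,V],[A,V],[A,W]), ([V,V],sigmaW,[W,W],[A,W],[]), ([V],tau,[W,V],[V,W],[W])]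
   [([A],Delta,[V,W],[V,W],[]), ([],mu,[A,A],[A],[V,W]), ([A],psiV,[V,A],[A,V],[W]), ([],sigmaV,[V,V],[A,V],[A,W]), ([V,V],sigmaW,[W,W],[A,W],[]), ([V],tau,[W,V],[V,W],[W])]"
  using sg3 unfolding eqn_def sigma_tensor_def by (simp add: ch.simps lay.simps NS tens_split[of sigmaV sigmaW])

lemma Gq: "ch [V,W,A,A]
    [([],psiV,[V,A],[A,V],[W]), ([V],psiW,[W,A],[A,W],[]), ([],Delta,[V,W],[V,W],[A]), ([V,W],mu,[A,A],[A],[])]
  = ch [V,W,A,A]
    [([],mu,[A,A],[A],[V,W]), ([A],psiV,[V,A],[A,V],[W]), ([A,V],psiW,[W,A],[A,W],[]), ([A],Delta,[V,W],[V,W],[A]), ([],psiV,[V,A],[A,V],[W,A]), ([V],psiW,[W,A],[A,W],[A]), ([],Delta,[V,W],[V,W],[A,A])]"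
  apply (rule swp_step[where n=2]; simp)
  apply (rule rep_step[OF R_pmW[THEN eqn_sym], where n=1 and P="[V]" and Q="[]"]; simp)
  apply (rule rep_step[OF R_pmV[THEN eqn_sym], where n=0 and P="[]" and Q="[W]"]; simp)
  apply (rule swp_step[where n=2]; simp)
  apply (rule rep_step[OF R_L1, where n=3 and P="[]" and Q="[A]"]; simp)
  done

lemma G3: "ch [V,W,V,W]
    [([],mu,[A,A],[A],[V,W]), ([A],psiV,[V,A],[A,V],[W]), ([A,V],psiW,[W,A],[A,W],[]), ([A],Delta,[V,W],[V,W],[A]), ([A,V,W],eta,[],[A],[]), ([],mu,[A,A],[A],[V,W]), ([A],psiV,[V,A],[A,V],[W]), ([],sigmaV,[V,V],[A,V],[A,W]), ([V,V],sigmaW,[W,W],[A,W],[]), ([V],tau,[W,V],[V,W],[W])]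
  = ch [V,W,V,W]
    [([],mu,[A,A],[A],[V,W]), ([A],psiV,[V,A],[A,V],[W]), ([],sigmaV,[V,V],[A,V],[A,W]), ([V,V],sigmaW,[W,W],[A,W],[]), ([V],tau,[W,V],[V,W],[W])]"
  apply (rule swp_step[where n=3]; simp)
  apply (rule rep_step[OF R_S3[THEN eqn_sym], where n=4 and P="[]" and Q="[]"]; simp)
  apply (rule swp_step[where n=3]; simp)
  apply (rule swp_step[where n=4]; simp)
  apply (rule swp_step[where n=5]; simp)
  apply (rule swp_step[where n=2]; simp)
  apply (rule swp_step[where n=3]; simp)
  apply (rule swp_step[where n=4]; simp)
  apply (rule swp_step[where n=1]; simp)
  apply (rule rep_step[OF R_assoc, where n=0 and P="[]" and Q="[V,W]"]; simp)
  apply (rule rep_step[OF R_pmV, where n=1 and P="[A]" and Q="[W]"]; simp)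
  apply (rule swp_step[where n=2]; simp)
  apply (rule rep_step[OF R_nabW, where n=3 and P="[V,V]" and Q="[]"]; simp)
  done

lemma R_G1p: "eqn [V,W,V,W,A]
    [([],mu,[A,A],[A],[V,W]), ([A],psiV,[V,A],[A,V],[W]), ([A,V],psiW,[W,A],[A,W],[]), ([],mu,[A,A],[A],[V,W,A]), ([A],psiV,[V,A],[A,V],[W,A]), ([],sigmaV,[V,V],[A,V],[A,W,A]), ([V,V],sigmaW,[W,W],[A,W],[A]), ([V],tau,[W,V],[V,W],[W,A])]
    [([],mu,[A,A],[A],[V,W]), ([A],mu,[A,A],[A],[V,W]), ([A,A],psiV,[V,A],[A,V],[W]), ([A],sigmaV,[V,V],[A,V],[A,W]), ([A,V,V],sigmaW,[W,W],[A,W],[]), ([A,V],tau,[W,V],[V,W],[W]), ([],psiV,[V,A],[A,V],[W,V,W]), ([V],psiW,[W,A],[A,W],[V,W]), ([V,W],psiV,[V,A],[A,V],[W]), ([V,W,V],psiW,[W,A],[A,W],[])]"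
proof -
  have "ch [V,W,V,W,A]
    [([],mu,[A,A],[A],[V,W]), ([A],psiV,[V,A],[A,V],[W]), ([A,V],psiW,[W,A],[A,W],[]), ([],mu,[A,A],[A],[V,W,A]), ([A],psiV,[V,A],[A,V],[W,A]), ([],sigmaV,[V,V],[A,V],[A,W,A]), ([V,V],sigmaW,[W,W],[A,W],[A]), ([V],tau,[W,V],[V,W],[W,A])]
  = ch [V,W,V,W,A]
    [([],mu,[A,A],[A],[V,W]), ([A],mu,[A,A],[A],[V,W]), ([A,A],psiV,[V,A],[A,V],[W]), ([A],sigmaV,[V,V],[A,V],[A,W]), ([A,V,V],sigmaW,[W,W],[A,W],[]), ([A,V],tau,[W,V],[V,W],[W]), ([],psiV,[V,A],[A,V],[W,V,W]), ([V],psiW,[W,A],[A,W],[V,W]), ([V,W],psiV,[V,A],[A,V],[W]), ([V,W,V],psiW,[W,A],[A,W],[])]"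
  apply (rule swp_step[where n=2]; simp)
  apply (rule swp_step[where n=3]; simp)
  apply (rule swp_step[where n=1]; simp)
  apply (rule rep_step[OF R_assoc, where n=0 and P="[]" and Q="[V,W]"]; simp)
  apply (rule rep_step[OF R_pmV, where n=1 and P="[A]" and Q="[W]"]; simp)
  apply (rule swp_step[where n=3]; simp)
  apply (rule swp_step[where n=2]; simp)
  apply (rule rep_step[OF R_twW, where n=3 and P="[V,V]" and Q="[]"]; simp)
  apply (rule swp_step[where n=6]; simp)
  apply (rule rep_step[OF R_twV, where n=0 and P="[]" and Q="[W]"]; simp)
  apply (rule rep_step[OF R_pmV[THEN eqn_sym], where n=3 and P="[V]" and Q="[W]"]; simp)
  apply (rule swp_step[where n=5]; simp)
  apply (rule rep_step[OF R_T1, where n=6 and P="[V]" and Q="[W]"]; simp)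
  apply (rule rep_step[OF R_pmV[THEN eqn_sym], where n=2 and P="[]" and Q="[V,W]"]; simp)
  apply (rule swp_step[where n=4]; simp)
  apply (rule swp_step[where n=5]; simp)
  apply (rule swp_step[where n=6]; simp)
  apply (rule swp_step[where n=1]; simp)
  apply (rule rep_step[OF R_assoc, where n=0 and P="[]" and Q="[V,W]"]; simp)
  apply (rule rep_step[OF R_twV[THEN eqn_sym], where n=1 and P="[A]" and Q="[W]"]; simp)
  done
  then show ?thesis unfolding eqn_def by simp
qed

lemma G1: "ch [V,W,V,W,A]
    [([],mu,[A,A],[A],[V,W]), ([A],psiV,[V,A],[A,V],[W]), ([A,V],psiW,[W,A],[A,W],[]), ([A],Delta,[V,W],[V,W],[A]), ([],mu,[A,A],[A],[V,W,A]), ([A],psiV,[V,A],[A,V],[W,A]), ([],sigmaV,[V,V],[A,V],[A,W,A]), ([V,V],sigmaW,[W,W],[A,W],[A]), ([V],tau,[W,V],[V,W],[W,A])]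
  = ch [V,W,V,W,A]
    [([],mu,[A,A],[A],[V,W]), ([A],mu,[A,A],[A],[V,W]), ([A,A],psiV,[V,A],[A,V],[W]), ([A],sigmaV,[V,V],[A,V],[A,W]), ([A,V,V],sigmaW,[W,W],[A,W],[]), ([A,V],tau,[W,V],[V,W],[W]), ([],psiV,[V,A],[A,V],[W,V,W]), ([V],psiW,[W,A],[A,W],[V,W]), ([],Delta,[V,W],[V,W],[A,V,W]), ([V,W],psiV,[V,A],[A,V],[W]), ([V,W,V],psiW,[W,A],[A,W],[]), ([V,W],Delta,[V,W],[V,W],[A])]"
  apply (rule rep_step[OF R_S3[THEN eqn_sym], where n=3 and P="[]" and Q="[A]"]; simp)
  apply (rule rep_step[OF R_S1, where n=3 and P="[]" and Q="[A]"]; simp)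
  apply (rule rep_step[OF R_S2, where n=3 and P="[]" and Q="[A]"]; simp)
  apply (rule rep_step[OF R_G1p, where n=0 and P="[]" and Q="[]"]; simp)
  apply (rule swp_step[where n=10]; simp)
  apply (rule swp_step[where n=9]; simp)
  apply (rule swp_step[where n=8]; simp)
  done

lemma R_G2p: "eqn [V,W,V,W,V,W]
    [([],mu,[A,A],[A],[V,W]), ([A],mu,[A,A],[A],[V,W]), ([A,A],psiV,[V,A],[A,V],[W]), ([A],sigmaV,[V,V],[A,V],[A,W]), ([A,V,V],sigmaW,[W,W],[A,W],[]), ([A,V],tau,[W,V],[V,W],[W]), ([],mu,[A,A],[A],[V,W,V,W]), ([A],psiV,[V,A],[A,V],[W,V,W]), ([],sigmaV,[V,V],[A,V],[A,W,V,W]), ([V,V],sigmaW,[W,W],[A,W],[V,W]), ([V],tau,[W,V],[V,W],[W,V,W])]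
    [([],mu,[A,A],[A],[V,W]), ([A],mu,[A,A],[A],[V,W]), ([A,A],psiV,[V,A],[A,V],[W]), ([A],sigmaV,[V,V],[A,V],[A,W]), ([A,V,V],sigmaW,[W,W],[A,W],[]), ([A,V],tau,[W,V],[V,W],[W]), ([],psiV,[V,A],[A,V],[W,V,W]), ([V],psiW,[W,A],[A,W],[V,W]), ([V,W],mu,[A,A],[A],[V,W]), ([V,W,A],psiV,[V,A],[A,V],[W]), ([V,W],sigmaV,[V,V],[A,V],[A,W]), ([V,W,V,V],sigmaW,[W,W],[A,W],[]), ([V,W,V],tau,[W,V],[V,W],[W])]"
proof -
  have "ch [V,W,V,W,V,W]
    [([],mu,[A,A],[A],[V,W]), ([A],mu,[A,A],[A],[V,W]), ([A,A],psiV,[V,A],[A,V],[W]), ([A],sigmaV,[V,V],[A,V],[A,W]), ([A,V,V],sigmaW,[W,W],[A,W],[]), ([A,V],tau,[W,V],[V,W],[W]), ([],mu,[A,A],[A],[V,W,V,W]), ([A],psiV,[V,A],[A,V],[W,V,W]), ([],sigmaV,[V,V],[A,V],[A,W,V,W]), ([V,V],sigmaW,[W,W],[A,W],[V,W]), ([V],tau,[W,V],[V,W],[W,V,W])]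
  = ch [V,W,V,W,V,W]
    [([],mu,[A,A],[A],[V,W]), ([A],mu,[A,A],[A],[V,W]), ([A,A],psiV,[V,A],[A,V],[W]), ([A],sigmaV,[V,V],[A,V],[A,W]), ([A,V,V],sigmaW,[W,W],[A,W],[]), ([A,V],tau,[W,V],[V,W],[W]), ([],psiV,[V,A],[A,V],[W,V,W]), ([V],psiW,[W,A],[A,W],[V,W]), ([V,W],mu,[A,A],[A],[V,W]), ([V,W,A],psiV,[V,A],[A,V],[W]), ([V,W],sigmaV,[V,V],[A,V],[A,W]), ([V,W,V,V],sigmaW,[W,W],[A,W],[]), ([V,W,V],tau,[W,V],[V,W],[W])]"
  apply (rule rep_step[OF R_twV, where n=6 and P="[]" and Q="[W,V,W]"]; simp)
  apply (rule swp_step[where n=5]; simp)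
  apply (rule swp_step[where n=4]; simp)
  apply (rule swp_step[where n=3]; simp)
  apply (rule swp_step[where n=2]; simp)
  apply (rule swp_step[where n=1]; simp)
  apply (rule swp_step[where n=6]; simp)
  apply (rule swp_step[where n=5]; simp)
  apply (rule rep_step[OF R_assoc, where n=0 and P="[]" and Q="[V,W]"]; simp)
  apply (rule rep_step[OF R_assoc[THEN eqn_sym], where n=1 and P="[A]" and Q="[V,W]"]; simp)
  apply (rule swp_step[where n=2]; simp)
  apply (rule rep_step[OF R_cocV, where n=3 and P="[A]" and Q="[A,W]"]; simp)
  apply (rule rep_step[OF R_assoc[THEN eqn_sym], where n=0 and P="[]" and Q="[V,W]"]; simp)
  apply (rule swp_step[where n=1]; simp)
  apply (rule rep_step[OF R_assoc[THEN eqn_sym], where n=2 and P="[]" and Q="[V,A,W]"]; simp)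
  apply (rule swp_step[where n=3]; simp)
  apply (rule swp_step[where n=8]; simp)
  apply (rule swp_step[where n=7]; simp)
  apply (rule swp_step[where n=6]; simp)
  apply (rule rep_step[OF R_pmV, where n=4 and P="[]" and Q="[V,A,W]"]; simp)
  apply (rule swp_step[where n=6]; simp)
  apply (rule swp_step[where n=5]; simp)
  apply (rule swp_step[where n=8]; simp)
  apply (rule rep_step[OF R_T2, where n=6 and P="[V]" and Q="[W]"]; simp)
  apply (rule swp_step[where n=1]; simp)
  apply (rule rep_step[OF R_assoc, where n=0 and P="[]" and Q="[V,W]"]; simp)
  apply (rule rep_step[OF R_twV, where n=1 and P="[A]" and Q="[W]"]; simp)
  apply (rule swp_step[where n=4]; simp)
  apply (rule rep_step[OF R_assoc[THEN eqn_sym], where n=0 and P="[]" and Q="[V,W]"]; simp)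
  apply (rule swp_step[where n=1]; simp)
  apply (rule rep_step[OF R_pmV, where n=2 and P="[]" and Q="[V,W]"]; simp)
  apply (rule swp_step[where n=5]; simp)
  apply (rule swp_step[where n=4]; simp)
  apply (rule rep_step[OF R_assoc, where n=3 and P="[V]" and Q="[V,W]"]; simp)
  apply (rule swp_step[where n=6]; simp)
  apply (rule rep_step[OF R_pmV, where n=4 and P="[V,A]" and Q="[W]"]; simp)
  apply (rule sym)
  apply (rule rep_step[OF R_pmW[THEN eqn_sym], where n=7 and P="[V]" and Q="[V,W]"]; simp)
  apply (rule swp_step[where n=5]; simp)
  apply (rule swp_step[where n=6]; simp)
  apply (rule swp_step[where n=9]; simp)
  apply (rule rep_step[OF R_T1[THEN eqn_sym], where n=7 and P="[V,A]" and Q="[W]"]; simp)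
  apply (rule rep_step[OF R_twV, where n=1 and P="[A]" and Q="[W]"]; simp)
  apply (rule swp_step[where n=5]; simp)
  apply (rule swp_step[where n=4]; simp)
  apply (rule rep_step[OF R_assoc[THEN eqn_sym], where n=0 and P="[]" and Q="[V,W]"]; simp)
  apply (rule swp_step[where n=1]; simp)
  apply (rule rep_step[OF R_pmV, where n=2 and P="[]" and Q="[V,W]"]; simp)
  apply (rule swp_step[where n=5]; simp)
  apply (rule swp_step[where n=4]; simp)
  apply (rule rep_step[OF R_assoc, where n=3 and P="[V]" and Q="[V,W]"]; simp)
  apply (rule swp_step[where n=6]; simp)
  apply (rule rep_step[OF R_pmV, where n=4 and P="[V,A]" and Q="[W]"]; simp)
  apply (rule swp_step[where n=10]; simp)
  apply (rule swp_step[where n=9]; simp)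
  apply (rule swp_step[where n=8]; simp)
  apply (rule rep_step[OF R_cocW[THEN eqn_sym], where n=5 and P="[V,A,V]" and Q="[]"]; simp)
  done
  then show ?thesis unfolding eqn_def by simp
qed

lemma G2: "ch [V,W,V,W,V,W]
    [([],mu,[A,A],[A],[V,W]), ([A],mu,[A,A],[A],[V,W]), ([A,A],psiV,[V,A],[A,V],[W]), ([A],sigmaV,[V,V],[A,V],[A,W]), ([A,V,V],sigmaW,[W,W],[A,W],[]), ([A,V],tau,[W,V],[V,W],[W]), ([],mu,[A,A],[A],[V,W,V,W]), ([A],psiV,[V,A],[A,V],[W,V,W]), ([],sigmaV,[V,V],[A,V],[A,W,V,W]), ([V,V],sigmaW,[W,W],[A,W],[V,W]), ([V],tau,[W,V],[V,W],[W,V,W])]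
  = ch [V,W,V,W,V,W]
    [([],mu,[A,A],[A],[V,W]), ([A],mu,[A,A],[A],[V,W]), ([A,A],psiV,[V,A],[A,V],[W]), ([A],sigmaV,[V,V],[A,V],[A,W]), ([A,V,V],sigmaW,[W,W],[A,W],[]), ([A,V],tau,[W,V],[V,W],[W]), ([],psiV,[V,A],[A,V],[W,V,W]), ([V],psiW,[W,A],[A,W],[V,W]), ([],Delta,[V,W],[V,W],[A,V,W]), ([V,W],mu,[A,A],[A],[V,W]), ([V,W,A],psiV,[V,A],[A,V],[W]), ([V,W],sigmaV,[V,V],[A,V],[A,W]), ([V,W,V,V],sigmaW,[W,W],[A,W],[]), ([V,W,V],tau,[W,V],[V,W],[W])]"
  apply (rule rep_step[OF R_S1, where n=6 and P="[]" and Q="[V,W]"]; simp)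
  apply (rule rep_step[OF R_S2, where n=6 and P="[]" and Q="[V,W]"]; simp)
  apply (rule rep_step[OF R_S2, where n=1 and P="[A]" and Q="[]"]; simp)
  apply (rule swp_step[where n=6]; simp)
  apply (rule swp_step[where n=7]; simp)
  apply (rule swp_step[where n=8]; simp)
  apply (rule swp_step[where n=9]; simp)
  apply (rule swp_step[where n=10]; simp)
  apply (rule rep_step[OF R_G2p, where n=0 and P="[]" and Q="[]"]; simp)
  apply (rule rep_step[OF R_S2[THEN eqn_sym], where n=8 and P="[V,W]" and Q="[]"]; simp)
  apply (rule rep_step[OF R_S1[THEN eqn_sym], where n=8 and P="[V,W]" and Q="[]"]; simp)
  apply (rule swp_step[where n=12]; simp)
  apply (rule swp_step[where n=11]; simp)
  apply (rule swp_step[where n=10]; simp)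
  apply (rule swp_step[where n=9]; simp)
  apply (rule swp_step[where n=8]; simp)
  done


lemma F_tw: "twisted A eta mu (V \<odot> W) (psi_tensor A V W psiV psiW Delta) (sigma_tensor A mu V psiV sigmaV W sigmaW tau)"
  using G1 unfolding twisted_def psi_tensor_def sigma_tensor_def
  by (simp add: ch.simps lay.simps NS tens_split[of sigmaV sigmaW])

lemma F_coc: "cocycle A eta mu (V \<odot> W) (psi_tensor A V W psiV psiW Delta) (sigma_tensor A mu V psiV sigmaV W sigmaW tau)"
  using G2 unfolding cocycle_def psi_tensor_def sigma_tensor_def
  by (simp add: ch.simps lay.simps NS tens_split[of sigmaV sigmaW])

lemma F_nab: "nabla A eta mu (V \<odot> W) (psi_tensor A V W psiV psiW Delta) \<cdot> sigma_tensor A mu V psiV sigmaV W sigmaW tau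
    = sigma_tensor A mu V psiV sigmaV W sigmaW tau"
  using G3 unfolding nabla_def psi_tensor_def sigma_tensor_def
  by (simp add: ch.simps lay.simps NS tens_split[of sigmaV sigmaW])

lemma F_pm: "(mu \<otimes> I (V \<odot> W)) \<cdot> (I A \<otimes> psi_tensor A V W psiV psiW Delta) \<cdot> (psi_tensor A V W psiV psiW Delta \<otimes> I A)
   = psi_tensor A V W psiV psiW Delta \<cdot> (I (V \<odot> W) \<otimes> mu)"
  using Gq unfolding psi_tensor_def
  by (simp add: ch.simps lay.simps NS)

lemma F_quad: "quadruple A eta mu (V \<odot> W) (psi_tensor A V W psiV psiW Delta) (sigma_tensor A mu V psiV sigmaV W sigmaW tau)"
  unfolding quadruple_def using qV F_pm F_nab
  by (simp add: quadruple_def hom_def psi_tensor_def sigma_tensor_def)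

lemma F_all: "twisted A eta mu (V \<odot> W) (psi_tensor A V W psiV psiW Delta) (sigma_tensor A mu V psiV sigmaV W sigmaW tau)
  \<and> cocycle A eta mu (V \<odot> W) (psi_tensor A V W psiV psiW Delta) (sigma_tensor A mu V psiV sigmaV W sigmaW tau)
  \<and> nabla A eta mu (V \<odot> W) (psi_tensor A V W psiV psiW Delta) \<cdot> sigma_tensor A mu V psiV sigmaV W sigmaW tau
    = sigma_tensor A mu V psiV sigmaV W sigmaW tau
  \<and> weak_crossed_product A eta mu (V \<odot> W) (psi_tensor A V W psiV psiW Delta) (sigma_tensor A mu V psiV sigmaV W sigmaW tau)"
  using F_tw F_coc F_nab F_quad unfolding weak_crossed_product_def by simp

end


theorem mainTheorem2:
  fixes C :: "('o, 'm) smcat"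
    and A V W :: 'o and eta mu psiV sigmaV psiW sigmaW Delta tau :: 'm
  assumes "strict_monoidal_cat C"
    and "strict_monoidal_cat.quadruple C A eta mu V psiV sigmaV"
    and "strict_monoidal_cat.quadruple C A eta mu W psiW sigmaW"
    and "strict_monoidal_cat.twisted C A eta mu V psiV sigmaV"
    and "strict_monoidal_cat.cocycle C A eta mu V psiV sigmaV"
    and "strict_monoidal_cat.twisted C A eta mu W psiW sigmaW"
    and "strict_monoidal_cat.cocycle C A eta mu W psiW sigmaW"
    and "strict_monoidal_cat.link_morphism C A eta mu V psiV W psiW Delta"
    and "strict_monoidal_cat.twisting_morphism C A mu V psiV sigmaV W psiW sigmaW tau"
    and "strict_monoidal_cat.sigma_tensor C A mu V psiV sigmaV W sigmaW tau
           = c_cmp C (strict_monoidal_cat.sigma_tensor C A mu V psiV sigmaV W sigmaW tau)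
                     (c_tmor C Delta (c_idm C (c_tobj C V W)))"
    and "strict_monoidal_cat.sigma_tensor C A mu V psiV sigmaV W sigmaW tau
           = c_cmp C (strict_monoidal_cat.sigma_tensor C A mu V psiV sigmaV W sigmaW tau)
                     (c_tmor C (c_idm C (c_tobj C V W)) Delta)"
    and "strict_monoidal_cat.sigma_tensor C A mu V psiV sigmaV W sigmaW tau
           = c_cmp C (c_tmor C (c_idm C A) Delta)
                     (strict_monoidal_cat.sigma_tensor C A mu V psiV sigmaV W sigmaW tau)"
  shows "strict_monoidal_cat.twisted C A eta mu (c_tobj C V W)
            (strict_monoidal_cat.psi_tensor C A V W psiV psiW Delta)
            (strict_monoidal_cat.sigma_tensor C A mu V psiV sigmaV W sigmaW tau)
       \<and> strict_monoidal_cat.cocycle C A eta mu (c_tobj C V W)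
            (strict_monoidal_cat.psi_tensor C A V W psiV psiW Delta)
            (strict_monoidal_cat.sigma_tensor C A mu V psiV sigmaV W sigmaW tau)
       \<and> c_cmp C (strict_monoidal_cat.nabla C A eta mu (c_tobj C V W)
                   (strict_monoidal_cat.psi_tensor C A V W psiV psiW Delta))
                (strict_monoidal_cat.sigma_tensor C A mu V psiV sigmaV W sigmaW tau)
            = strict_monoidal_cat.sigma_tensor C A mu V psiV sigmaV W sigmaW tau
       \<and> strict_monoidal_cat.weak_crossed_product C A eta mu (c_tobj C V W)
            (strict_monoidal_cat.psi_tensor C A V W psiV psiW Delta)
            (strict_monoidal_cat.sigma_tensor C A mu V psiV sigmaV W sigmaW tau)"
  proof -
  interpret S: setting C A V W eta mu psiV sigmaV psiW sigmaW Delta tau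
    using assms unfolding setting_def setting_axioms_def by blast
  show ?thesis using S.F_all by simp
qed

end
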